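(* Assume $P(X_1>0)\in(0,1)$ and $P(X_1<0)\in(0,1)$. Then $I_\delta(x)>0$ for every $x\in(\delta_\mu,\infty]$.
   Context: Let $\{X_i\}_{i\ge1}$ be i.i.d. real-valued with law $\mu$, $M_n(\theta)=\frac1n\sum_{i=1}^ne^{\theta X_i}$. For a probability $\nu$, $f_\nu(\theta)=\int e^{\theta x}\nu(dx)\in(0,\infty]$. Loynes' exponent $\delta_\mu=\sup\{\theta:f_\mu(\theta)\le1\}\in[0,\infty]$. For $f:\mathbb R\to[-\infty,\infty]$, $\mathrm{epi}(f)=\{(\theta,b):b\ge f(\theta)\}$. On $\mathbb R^2$ use the box metric $d$, $d(x,A)=\inf_{y\in A}d(x,y)$, $\overline B_k=\{x:d(0,x)\le k\}$. The Attouch–Wets topology $\tau_{AW}$ has local base at $f$ given by $V_k(f)=\{g:\sup_{x\in\overline B_k}|d(x,\mathrm{epi}(g))-d(x,\mathrm{epi}(f))|<1/k\}$. $\mathcal X_M$ = lower semicontinuous convex $f:\mathbb R\to(0,\infty]$ with $f(0)<\infty$ for which some probability $\nu$ satisfies $f(\theta)=f_\nu(\theta)$ whenever $f(\theta)<\infty$. $I_M$ is the good rate function of the LDP of $\{M_n\}$ in $(\mathcal X_M,\tau_{AW})$: $I_M(f)=-\inf_{G\ni f}\limsup_n\frac1n\log P(M_n\in G)$ over $\tau_{AW}$-open $G\ni f$. $I_\delta:[0,\infty]\to[0,\infty]$ is $I_\delta(x)=\inf_{f\in C_x}I_M(f)$, where for $x\in(0,\infty)$, $C_x=\{f\in\mathcal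 X_M:f(x)=1,\text{ or }f(x)<1\text{ and }f(y)=\infty\ \forall y>x\}$, $C_0=\{f\in\mathcal X_M:f(x)\ge1\ \forall x>0\}$, $C_\infty=\{f\in\mathcal X_M:f(x)\le1\ \forall x\ge0\}$; it is the rate function of the LDP of the estimators $\delta_n=\sup\{\theta:M_n(\theta)\le1\}$. *)

theory Defs
  imports "HOL-Probability.Probability"
begin

definition mgf :: "real measure \<Rightarrow> real \<Rightarrow> ereal" where
  "mgf \<nu> \<theta> = enn2ereal (\<integral>\<^sup>+ x. ennreal (exp (\<theta> * x)) \<partial>\<nu>)"

definition real_prob :: "real measure \<Rightarrow> bool" where
  "real_prob \<nu> \<longleftrightarrow> prob_space \<nu> \<and> sets \<nu> = sets borel"

definition loynes :: "real measure \<Rightarrow> ereal" where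
  "loynes \<mu> = Sup {ereal \<theta> | \<theta>. mgf \<mu> \<theta> \<le> 1}"

definition epi :: "(real \<Rightarrow> ereal) \<Rightarrow> (real \<times> real) set" where
  "epi f = {(\<theta>, b). ereal b \<ge> f \<theta>}"

text \<open>Box metric on R^2 and distance to a set (infimum; +infinity for the empty set).\<close>
definition boxdist :: "real \<times> real \<Rightarrow> real \<times> real \<Rightarrow> real" where
  "boxdist p q = max \<bar>fst p - fst q\<bar> \<bar>snd p - snd q\<bar>"

definition setdist :: "real \<times> real \<Rightarrow> (real \<times> real) set \<Rightarrow> ereal" where
  "setdist p A = (INF q\<in>A. ereal (boxdist p q))"

definition boxball :: "real \<Rightarrow> (real \<times> real) set" where
  "boxball k = {p. boxdist (0, 0) p \<le> k}"

definition AW_nbhd :: "nat \<Rightarrow> (real \<Rightarrow> ereal) \<Rightarrow> (real \<Rightarrow> ereal) set" where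
  "AW_nbhd k f = {g. (SUP p\<in>boxball (real k). \<bar>setdist p (epi g) - setdist p (epi f)\<bar>)
                      < ereal (1 / real k)}"

definition lsc :: "(real \<Rightarrow> ereal) \<Rightarrow> bool" where
  "lsc f \<longleftrightarrow> (\<forall>x c. c < f x \<longrightarrow> (\<forall>\<^sub>F y in at x. c < f y))"

definition convex_fun :: "(real \<Rightarrow> ereal) \<Rightarrow> bool" where
  "convex_fun f \<longleftrightarrow> convex (epi f)"

definition XM :: "(real \<Rightarrow> ereal) set" where
  "XM = {f. lsc f \<and> convex_fun f \<and> (\<forall>\<theta>. 0 < f \<theta>) \<and> f 0 < \<infinity> \<and>
            (\<exists>\<nu>. real_prob \<nu> \<and> (\<forall>\<theta>. f \<theta> < \<infinity> \<longrightarrow> f \<theta> = mgf \<nu> \<theta>))}"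

text \<open>Open sets of the Attouch--Wets topology on X_M (topology generated by the
  local bases V_k(f), k >= 1).\<close>
definition AW_open :: "(real \<Rightarrow> ereal) set \<Rightarrow> bool" where
  "AW_open G \<longleftrightarrow> G \<subseteq> XM \<and> (\<forall>f\<in>G. \<exists>k\<ge>1. AW_nbhd k f \<inter> XM \<subseteq> G)"

definition Mn :: "nat \<Rightarrow> (nat \<Rightarrow> real) \<Rightarrow> real \<Rightarrow> ereal" where
  "Mn n x \<theta> = ereal ((1 / real n) * (\<Sum>i<n. exp (\<theta> * x i)))"

definition probMn :: "real measure \<Rightarrow> nat \<Rightarrow> (real \<Rightarrow> ereal) set \<Rightarrow> real" where
  "probMn \<mu> n G = measure (PiM {..<n} (\<lambda>_. \<mu>))
                     {x \<in> space (PiM {..<n} (\<lambda>_. \<mu>)). Mn n x \<in> G}"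

definition elog :: "real \<Rightarrow> ereal" where
  "elog p = (if p \<le> 0 then - \<infinity> else ereal (ln p))"

definition IM :: "real measure \<Rightarrow> (real \<Rightarrow> ereal) \<Rightarrow> ereal" where
  "IM \<mu> f = - (INF G\<in>{G. AW_open G \<and> f \<in> G}.
                 limsup (\<lambda>n. ereal (1 / real n) * elog (probMn \<mu> n G)))"

definition Cset :: "ereal \<Rightarrow> (real \<Rightarrow> ereal) set" where
  "Cset x = (if x = 0 then {f\<in>XM. \<forall>y>0. f y \<ge> 1}
             else if x = \<infinity> then {f\<in>XM. \<forall>y\<ge>0. f y \<le> 1}
             else {f\<in>XM. f (real_of_ereal x) = 1 \<or>
                          (f (real_of_ereal x) < 1 \<and> (\<forall>y>real_of_ereal x. f y = \<infinity>))})"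

definition Idelta :: "real measure \<Rightarrow> ereal \<Rightarrow> ereal" where
  "Idelta \<mu> x = (INF f\<in>Cset x. IM \<mu> f)"

end

theory Submission
  imports Defs
begin
lemma exp_quad: fixes u::real assumes "\<bar>u\<bar> \<le> 1" shows "exp u \<le> 1 + u + u^2"
proof (cases "0 \<le> u")
  case True thus ?thesis using exp_bound assms by auto
next
  case False
  define v where "v = -u"
  have v: "0 \<le> v" "v \<le> 1" using False assms v_def by auto
  have p: "0 < 1 - v + v^2"
  proof (cases "v < 1")
    case True thus ?thesis using v by (smt (verit) zero_le_power2)
  next
    case False thus ?thesis using v by simp
  qed
  have "exp v \<ge> 1 + v" by (rule exp_ge_add_one_self)
  hence "exp v * (1 - v + v^2) \<ge> (1+v)*(1 - v + v^2)" using p by (intro mult_right_mono) auto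
  moreover have "(1+v)*(1 - v + v^2) = 1 + v^3" by (simp add: algebra_simps power2_eq_square power3_eq_cube)
  moreover have "v^3 \<ge> 0" using v by simp
  ultimately have "1 \<le> exp v * (1 - v + v^2)" by linarith
  hence "exp (-v) \<le> 1 - v + v^2" using p by (simp add: exp_minus field_simps)
  thus ?thesis by (simp add: v_def)
qed
lemma chernoff:
  fixes \<mu> :: "real measure" and g :: "real \<Rightarrow> real"
  assumes P: "prob_space \<mu>" and gm[measurable]: "g \<in> borel_measurable \<mu>"
    and g0: "\<And>x. 0 \<le> g x" and gK: "\<And>x. g x \<le> K" and a0: "0 < a" and am: "a < integral\<^sup>L \<mu> g"
  shows "\<exists>\<rho>. 0 < \<rho> \<and> \<rho> < 1 \<and> (\<forall>n A. A \<subseteq> {x \<in> space (PiM {..<n} (\<lambda>_. \<mu>)). (\<Sum>i<n. g (x i)) \<le> real n * a}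
      \<longrightarrow> measure (PiM {..<n} (\<lambda>_. \<mu>)) A \<le> \<rho>^n)"
proof -
  interpret prob_space \<mu> by (rule P)
  define m where "m = integral\<^sup>L \<mu> g"
  define D where "D = a + K"
  have K0: "0 \<le> K" using g0[of 0] gK[of 0] by linarith
  have D0: "0 < D" using a0 K0 D_def by linarith
  define s where "s = min (1/D) ((m - a)/(2*D^2))"
  have ma: "0 < m - a" using am m_def by simp
  have s0: "0 < s" using D0 ma s_def by simp
  have sD: "s * D \<le> 1" using D0 s_def by (simp add: field_simps min_def)
  have sD2: "s^2 * D^2 \<le> s * (m - a) / 2"
  proof -
    have "s \<le> (m - a)/(2*D^2)" using s_def by simp
    hence "s * D^2 \<le> (m-a)/2" using D0 by (simp add: field_simps)
    hence "s * (s * D^2) \<le> s * ((m-a)/2)" using s0 by (intro mult_left_mono) auto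
    thus ?thesis by (simp add: power2_eq_square algebra_simps)
  qed
  have intg: "integrable \<mu> g"
    by (rule integrable_const_bound[where B=K]) (use g0 gK in auto)
  define \<phi> where "\<phi> x = exp (s * (a - g x))" for x
  have phib: "\<phi> x \<le> 1 + s * a + s^2 * D^2 - s * g x" for x
  proof -
    have ab: "\<bar>a - g x\<bar> \<le> D" using g0[of x] gK[of x] a0 D_def by auto
    have "\<bar>s * (a - g x)\<bar> \<le> s * D" using ab s0 by (simp add: abs_mult mult_left_mono)
    hence u1: "\<bar>s * (a - g x)\<bar> \<le> 1" using sD by linarith
    have "(s * (a - g x))^2 = \<bar>s * (a - g x)\<bar>^2" by simp
    also have "\<dots> \<le> (s*D)^2" using \<open>\<bar>s * (a - g x)\<bar> \<le> s * D\<close> by (intro power_mono) auto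
    finally have "(s * (a - g x))^2 \<le> s^2 * D^2" by (simp add: power_mult_distrib)
    thus ?thesis using exp_quad[OF u1] unfolding \<phi>_def by (simp add: algebra_simps)
  qed
  define \<rho> where "\<rho> = max (1/2) (1 - s * (m - a) / 2)"
  have \<rho>0: "0 < \<rho>" and \<rho>1: "\<rho> < 1" using s0 ma \<rho>_def by auto
  have intphi: "(\<integral>\<^sup>+ x. ennreal (\<phi> x) \<partial>\<mu>) \<le> ennreal \<rho>"
  proof -
    have "(\<integral>\<^sup>+ x. ennreal (\<phi> x) \<partial>\<mu>) \<le> (\<integral>\<^sup>+ x. ennreal (1 + s * a + s^2 * D^2 - s * g x) \<partial>\<mu>)"
      by (intro nn_integral_mono) (simp add: phib ennreal_leI)
    also have "\<dots> = ennreal (integral\<^sup>L \<mu> (\<lambda>x. 1 + s * a + s^2 * D^2 - s * g x))"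
    proof (rule nn_integral_eq_integral)
      show "integrable \<mu> (\<lambda>x. 1 + s * a + s^2 * D^2 - s * g x)" using intg by auto
      show "AE x in \<mu>. 0 \<le> 1 + s * a + s\<^sup>2 * D\<^sup>2 - s * g x"
      proof (intro always_eventually allI)
        fix x show "0 \<le> 1 + s * a + s\<^sup>2 * D\<^sup>2 - s * g x"
          using phib[of x] exp_gt_zero[of "s*(a - g x)"] unfolding \<phi>_def by linarith
      qed
    qed
    also have "integral\<^sup>L \<mu> (\<lambda>x. 1 + s * a + s^2 * D^2 - s * g x) = 1 + s * a + s^2 * D^2 - s * m"
      using intg unfolding m_def by (simp add: prob_space)
    also have "\<dots> \<le> 1 - s * (m - a) / 2" proof -
      have "s*(m-a) = s*m - s*a" by (simp add: algebra_simps)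
      thus ?thesis using sD2 by (simp add: field_simps)
    qed
    also have "\<dots> \<le> \<rho>" unfolding \<rho>_def by simp
    finally show ?thesis by (simp add: ennreal_leI)
  qed
  have "measure (PiM {..<n} (\<lambda>_. \<mu>)) A \<le> \<rho>^n"
    if A: "A \<subseteq> {x \<in> space (PiM {..<n} (\<lambda>_. \<mu>)). (\<Sum>i<n. g (x i)) \<le> real n * a}" for n A
  proof (cases "A \<in> sets (PiM {..<n} (\<lambda>_. \<mu>))")
    case False thus ?thesis by (simp add: measure_notin_sets \<rho>0 less_imp_le)
  next
    case True
    let ?M = "PiM {..<n} (\<lambda>_. \<mu>)"
    interpret PM: prob_space ?M by (intro prob_space_PiM) (simp add: P)
    interpret PS: product_sigma_finite "\<lambda>_. \<mu>" by standard
    have "emeasure ?M A = (\<integral>\<^sup>+ x. indicator A x \<partial>?M)" using True by simp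
    also have "\<dots> \<le> (\<integral>\<^sup>+ x. (\<Prod>i\<in>{..<n}. ennreal (\<phi> (x i))) \<partial>?M)"
    proof (intro nn_integral_mono)
      fix x assume "x \<in> space ?M"
      show "indicator A x \<le> (\<Prod>i\<in>{..<n}. ennreal (\<phi> (x i)))"
      proof (cases "x \<in> A")
        case False thus ?thesis by simp
      next
        case True
        hence sx: "(\<Sum>i<n. g (x i)) \<le> real n * a" using A by auto
        have "(\<Prod>i\<in>{..<n}. ennreal (\<phi> (x i))) = ennreal (\<Prod>i\<in>{..<n}. \<phi> (x i))"
          by (simp add: prod_ennreal \<phi>_def)
        also have "(\<Prod>i\<in>{..<n}. \<phi> (x i)) = exp (\<Sum>i<n. s * (a - g (x i)))"
          by (simp add: \<phi>_def exp_sum)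
        also have "(\<Sum>i<n. s * (a - g (x i))) = s * (real n * a - (\<Sum>i<n. g (x i)))"
          by (simp add: sum_distrib_left sum_subtractf algebra_simps)
        finally have eq: "(\<Prod>i\<in>{..<n}. ennreal (\<phi> (x i))) = ennreal (exp (s * (real n * a - (\<Sum>i<n. g (x i)))))" .
        have "0 \<le> s * (real n * a - (\<Sum>i<n. g (x i)))" using s0 sx by simp
        hence "1 \<le> exp (s * (real n * a - (\<Sum>i<n. g (x i))))" by simp
        thus ?thesis using True eq by (simp add: ennreal_leI)
      qed
    qed
    also have "\<dots> = (\<Prod>i\<in>{..<n}. (\<integral>\<^sup>+ y. ennreal (\<phi> y) \<partial>\<mu>))"
      by (rule PS.product_nn_integral_prod[where f="\<lambda>_ y. ennreal (\<phi> y)"]) (auto simp: \<phi>_def)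
    also have "\<dots> = (\<integral>\<^sup>+ y. ennreal (\<phi> y) \<partial>\<mu>) ^ n" by simp
    also have "\<dots> \<le> ennreal \<rho> ^ n" by (intro power_mono intphi) simp
    also have "\<dots> = ennreal (\<rho> ^ n)" using \<rho>0 by (simp add: ennreal_power)
    finally have "emeasure ?M A \<le> ennreal (\<rho> ^ n)" .
    thus ?thesis using \<rho>0 by (simp add: PM.emeasure_eq_measure)
  qed
  thus ?thesis using \<rho>0 \<rho>1 by blast
qed
definition gf :: "real \<Rightarrow> nat \<Rightarrow> real \<Rightarrow> real" where
  "gf t j x = min (exp (t * x - \<bar>x\<bar> / real (Suc j))) (real (Suc j))"

lemma gf_meas[measurable]: "gf t j \<in> borel_measurable borel"
  unfolding gf_def by measurable

lemma gf_le_exp: "gf t j x \<le> exp (t * x - \<bar>x\<bar> / real (Suc j))"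
  unfolding gf_def by simp

lemma gf_nonneg: "0 \<le> gf t j x" unfolding gf_def by simp

lemma gf_mono: "i \<le> j \<Longrightarrow> gf t i x \<le> gf t j x"
proof -
  assume ij: "i \<le> j"
  have "\<bar>x\<bar> / real (Suc j) \<le> \<bar>x\<bar> / real (Suc i)" using ij by (intro divide_left_mono) auto
  hence "exp (t * x - \<bar>x\<bar> / real (Suc i)) \<le> exp (t * x - \<bar>x\<bar> / real (Suc j))" by simp
  moreover have "real (Suc i) \<le> real (Suc j)" using ij by simp
  ultimately show ?thesis unfolding gf_def by linarith
qed

lemma gf_lim: "(\<lambda>j. gf t j x) \<longlonglongrightarrow> exp (t * x)"
proof -
  have "(\<lambda>j. \<bar>x\<bar> * inverse (real (Suc j))) \<longlonglongrightarrow> \<bar>x\<bar> * 0"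
    by (intro tendsto_mult tendsto_const LIMSEQ_inverse_real_of_nat)
  hence "(\<lambda>j. exp (t * x - \<bar>x\<bar> / real (Suc j))) \<longlonglongrightarrow> exp (t * x - 0)"
    by (intro tendsto_exp tendsto_diff tendsto_const) (simp add: divide_inverse)
  hence L: "(\<lambda>j. exp (t * x - \<bar>x\<bar> / real (Suc j))) \<longlonglongrightarrow> exp (t * x)" by simp
  obtain N :: nat where N: "exp (t * x) \<le> real N" using real_arch_simple by blast
  have ev: "eventually (\<lambda>j. exp (t * x - \<bar>x\<bar> / real (Suc j)) = gf t j x) sequentially"
  proof (rule eventually_sequentiallyI[of N])
    fix j assume "N \<le> j"
    have "exp (t * x - \<bar>x\<bar> / real (Suc j)) \<le> exp (t * x)" by simp
    also have "\<dots> \<le> real (Suc j)" using N \<open>N \<le> j\<close> by simp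
    finally show "exp (t * x - \<bar>x\<bar> / real (Suc j)) = gf t j x" unfolding gf_def by simp
  qed
  show ?thesis using L ev by (rule Lim_transform_eventually)
qed

lemma gf_SUP: "(SUP j. ennreal (gf t j x)) = ennreal (exp (t * x))"
proof -
  have inc: "incseq (\<lambda>j. ennreal (gf t j x))"
    by (intro monoI ennreal_leI gf_mono)
  have "(\<lambda>j. ennreal (gf t j x)) \<longlonglongrightarrow> (SUP j. ennreal (gf t j x))" by (rule LIMSEQ_SUP[OF inc])
  moreover have "(\<lambda>j. ennreal (gf t j x)) \<longlonglongrightarrow> ennreal (exp (t * x))"
    by (intro tendsto_ennrealI gf_lim)
  ultimately show ?thesis by (rule LIMSEQ_unique)
qed

lemma pick_j:
  assumes P: "prob_space \<mu>" and S: "sets \<mu> = sets borel"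
    and L: "1 < (\<integral>\<^sup>+ x. ennreal (exp (t * x)) \<partial>\<mu>)"
  shows "\<exists>c j. 1 < c \<and> c < integral\<^sup>L \<mu> (gf t j)"
proof -
  interpret prob_space \<mu> by (rule P)
  have gm[measurable]: "gf t j \<in> borel_measurable \<mu>" for j
    using measurable_cong_sets[OF S refl] gf_meas by blast
  have "(\<integral>\<^sup>+ x. ennreal (exp (t * x)) \<partial>\<mu>) = (\<integral>\<^sup>+ x. (SUP j. ennreal (gf t j x)) \<partial>\<mu>)"
    by (simp add: gf_SUP)
  also have "\<dots> = (SUP j. \<integral>\<^sup>+ x. ennreal (gf t j x) \<partial>\<mu>)"
    by (rule nn_integral_monotone_convergence_SUP) (auto simp: incseq_def le_fun_def intro!: ennreal_leI gf_mono)
  finally have L2: "1 < (SUP j. \<integral>\<^sup>+ x. ennreal (gf t j x) \<partial>\<mu>)" using L by simp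
  obtain z where z: "1 < z" "z < (SUP j. \<integral>\<^sup>+ x. ennreal (gf t j x) \<partial>\<mu>)" using dense[OF L2] by blast
  then obtain j where j: "z < (\<integral>\<^sup>+ x. ennreal (gf t j x) \<partial>\<mu>)" by (auto simp: less_SUP_iff)
  have intg: "integrable \<mu> (gf t j)"
    by (rule integrable_const_bound[where B="real (Suc j)"]) (auto simp: gf_def)
  have "(\<integral>\<^sup>+ x. ennreal (gf t j x) \<partial>\<mu>) = ennreal (integral\<^sup>L \<mu> (gf t j))"
    by (rule nn_integral_eq_integral[OF intg]) (simp add: gf_nonneg)
  with j have zl: "z < ennreal (integral\<^sup>L \<mu> (gf t j))" by simp
  hence "z < top" using top.not_eq_extremum by fastforce
  then obtain c where c: "z = ennreal c" "0 \<le> c" by (cases z) auto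
  have "1 < c" using z(1) c by simp
  moreover have "c < integral\<^sup>L \<mu> (gf t j)" using zl c by (simp add: ennreal_less_iff)
  ultimately show ?thesis by blast
qed
lemma mgf_zero: assumes "real_prob \<nu>" shows "mgf \<nu> 0 = 1"
proof -
  interpret prob_space \<nu> using assms real_prob_def by blast
  show ?thesis unfolding mgf_def by (simp add: emeasure_space_1 one_ennreal.rep_eq)
qed

lemma XM_f0: assumes "f \<in> XM" shows "f 0 = 1"
proof -
  obtain \<nu> where "real_prob \<nu>" "\<forall>\<theta>. f \<theta> < \<infinity> \<longrightarrow> f \<theta> = mgf \<nu> \<theta>" "f 0 < \<infinity>"
    using assms unfolding XM_def by blast
  thus ?thesis using mgf_zero by auto
qed

lemma loynes_nonneg: assumes "real_prob \<mu>" shows "0 \<le> loynes \<mu>"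
proof -
  have "ereal 0 \<in> {ereal \<theta> |\<theta>. mgf \<mu> \<theta> \<le> 1}" using mgf_zero[OF assms] by auto
  hence "ereal 0 \<le> loynes \<mu>" unfolding loynes_def by (rule Sup_upper)
  thus ?thesis by (simp add: zero_ereal_def)
qed

lemma above_loynes: assumes "loynes \<mu> < ereal t" shows "1 < (\<integral>\<^sup>+ x. ennreal (exp (t * x)) \<partial>\<mu>)"
proof -
  have "\<not> mgf \<mu> t \<le> 1"
  proof
    assume "mgf \<mu> t \<le> 1"
    hence "ereal t \<le> loynes \<mu>" unfolding loynes_def by (intro Sup_upper) blast
    thus False using assms by simp
  qed
  hence "1 < enn2ereal (\<integral>\<^sup>+ x. ennreal (exp (t * x)) \<partial>\<mu>)" unfolding mgf_def by simp
  thus ?thesis by (simp add: less_ennreal.rep_eq one_ennreal.rep_eq)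
qed

lemma Cset_le:
  assumes t: "0 \<le> t" "ereal t < x" and x0: "x \<noteq> 0" and f: "f \<in> Cset x"
  shows "f t \<le> 1"
proof (cases "x = \<infinity>")
  case True thus ?thesis using f x0 t unfolding Cset_def by auto
next
  case False
  then obtain xr where xr: "x = ereal xr" using t by (cases x) auto
  have xt: "t < xr" using t xr by simp
  have fX: "f \<in> XM" and fx: "f xr \<le> 1" using f x0 False unfolding Cset_def xr by auto
  have f0: "f 0 = 1" by (rule XM_f0[OF fX])
  have cv: "convex (epi f)" using fX unfolding XM_def convex_fun_def by blast
  have p0: "(0, 1) \<in> epi f" using f0 unfolding epi_def by simp
  have p1: "(xr, 1) \<in> epi f" using fx unfolding epi_def by (simp add: one_ereal_def)
  define u where "u = t / xr"
  have u: "0 \<le> u" "u \<le> 1" using t xt u_def by auto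
  have "(1 - u) *\<^sub>R (0::real, 1::real) + u *\<^sub>R (xr, 1) \<in> epi f"
    using convexD[OF cv p0 p1, of "1-u" u] u by simp
  moreover have "(1 - u) *\<^sub>R (0::real, 1::real) + u *\<^sub>R (xr, 1) = (t, 1)"
    using xt t u_def by auto
  ultimately have "(t,1) \<in> epi f" by simp
  thus ?thesis unfolding epi_def by (simp add: one_ereal_def)
qed

lemma setdist_nonneg: "0 \<le> setdist p A"
  unfolding setdist_def boxdist_def by (intro INF_greatest) (auto simp: le_max_iff_disj)

lemma G_open: assumes r: "0 < r" shows "AW_open {g\<in>XM. setdist p (epi g) < ereal r}"
  unfolding AW_open_def
proof (intro conjI ballI)
  show "{g \<in> XM. setdist p (epi g) < ereal r} \<subseteq> XM" by blast
  fix f assume f: "f \<in> {g \<in> XM. setdist p (epi g) < ereal r}"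
  have d0: "0 \<le> setdist p (epi f)" by (rule setdist_nonneg)
  then obtain dr where dr: "setdist p (epi f) = ereal dr" using f by (cases "setdist p (epi f)") auto
  have drr: "dr < r" "0 \<le> dr" using f dr d0 by auto
  define k where "k = nat \<lceil>boxdist (0,0) p + 1 / (r - dr)\<rceil> + 1"
  have bd0: "0 \<le> boxdist (0,0) p" unfolding boxdist_def by simp
  have kge: "real k \<ge> boxdist (0,0) p + 1 / (r - dr) + 1"
    unfolding k_def using real_nat_ceiling_ge[of "boxdist (0,0) p + 1 / (r - dr)"] by simp
  have k1: "1 \<le> k" unfolding k_def by simp
  have "0 \<le> 1 / (r - dr)" using drr by simp
  hence "boxdist (0,0) p \<le> real k" using kge by linarith
  hence pk: "p \<in> boxball (real k)" unfolding boxball_def by simp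
  have "1 / (r - dr) < real k" using kge bd0 by linarith
  hence "1 < real k * (r - dr)" using drr by (simp add: divide_less_eq)
  hence ik: "1 / real k < r - dr" using k1 by (simp add: divide_less_eq mult.commute)
  have "AW_nbhd k f \<inter> XM \<subseteq> {g \<in> XM. setdist p (epi g) < ereal r}"
  proof
    fix g assume g: "g \<in> AW_nbhd k f \<inter> XM"
    have "\<bar>setdist p (epi g) - setdist p (epi f)\<bar> \<le> (SUP q\<in>boxball (real k). \<bar>setdist q (epi g) - setdist q (epi f)\<bar>)"
      using pk by (rule SUP_upper)
    also have "\<dots> < ereal (1 / real k)" using g unfolding AW_nbhd_def by blast
    finally have lt: "\<bar>setdist p (epi g) - ereal dr\<bar> < ereal (1 / real k)" using dr by simp
    have "setdist p (epi g) < ereal r"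
    proof (cases "setdist p (epi g)")
      case (real e)
      hence "\<bar>e - dr\<bar> < 1 / real k" using lt by simp
      thus ?thesis using real ik by simp
    next
      case PInf thus ?thesis using lt by simp
    next
      case MInf thus ?thesis by simp
    qed
    thus "g \<in> {g \<in> XM. setdist p (epi g) < ereal r}" using g by blast
  qed
  thus "\<exists>k\<ge>1. AW_nbhd k f \<inter> XM \<subseteq> {g \<in> XM. setdist p (epi g) < ereal r}" using k1 by blast
qed
lemma event_incl:
  assumes n: "0 < n" and r: "0 < r" and rj: "r \<le> 1 / real (Suc j)"
    and M: "Mn n x \<in> {g\<in>XM. setdist (t,1) (epi g) < ereal r}"
  shows "(\<Sum>i<n. gf t j (x i)) \<le> real n * (1 + r)"
proof -
  have "(INF q\<in>epi (Mn n x). ereal (boxdist (t,1) q)) < ereal r" using M unfolding setdist_def by simp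
  then obtain q where q: "q \<in> epi (Mn n x)" "ereal (boxdist (t,1) q) < ereal r"
    by (auto simp: INF_less_iff)
  obtain t' b where qq: "q = (t', b)" by (cases q)
  have tt: "\<bar>t - t'\<bar> < r" and bb: "\<bar>1 - b\<bar> < r" using q(2) unfolding qq boxdist_def by auto
  have "ereal ((1 / real n) * (\<Sum>i<n. exp (t' * x i))) \<le> ereal b"
    using q(1) unfolding qq epi_def Mn_def by simp
  hence "(1 / real n) * (\<Sum>i<n. exp (t' * x i)) \<le> b" by simp
  hence S: "(\<Sum>i<n. exp (t' * x i)) \<le> real n * b" using n by (simp add: field_simps)
  have "gf t j y \<le> exp (t' * y)" for y
  proof -
    have "(t - t') * y \<le> \<bar>(t - t') * y\<bar>" by (rule abs_ge_self)
    also have "\<dots> = \<bar>t - t'\<bar> * \<bar>y\<bar>" by (simp add: abs_mult)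
    also have "\<dots> \<le> r * \<bar>y\<bar>" using tt by (intro mult_right_mono) auto
    also have "\<dots> \<le> (1 / real (Suc j)) * \<bar>y\<bar>" using rj by (intro mult_right_mono) auto
    finally have "t * y - \<bar>y\<bar> / real (Suc j) \<le> t' * y" by (simp add: algebra_simps)
    hence "exp (t * y - \<bar>y\<bar> / real (Suc j)) \<le> exp (t' * y)" by simp
    thus ?thesis using gf_le_exp[of t j y] by linarith
  qed
  hence "(\<Sum>i<n. gf t j (x i)) \<le> (\<Sum>i<n. exp (t' * x i))" by (intro sum_mono) auto
  also have "\<dots> \<le> real n * b" by (rule S)
  also have "\<dots> \<le> real n * (1 + r)" using bb by (intro mult_left_mono) auto
  finally show ?thesis .
qed

theorem mainTheorem17:
  fixes \<mu> :: "real measure"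
  assumes "real_prob \<mu>"
    and "0 < measure \<mu> {0<..}" and "measure \<mu> {0<..} < 1"
    and "0 < measure \<mu> {..<0}" and "measure \<mu> {..<0} < 1"
  shows "\<forall>x. loynes \<mu> < x \<longrightarrow> 0 < Idelta \<mu> x"
proof (intro allI impI)
  fix x assume lx: "loynes \<mu> < x"
  have P: "prob_space \<mu>" and S: "sets \<mu> = sets borel" using assms(1) unfolding real_prob_def by auto
  have l0: "0 \<le> loynes \<mu>" by (rule loynes_nonneg[OF assms(1)])
  obtain t where t1: "loynes \<mu> < ereal t" and t2: "ereal t < x" using ereal_dense2[OF lx] by blast
  have t0: "0 \<le> t" using l0 t1 by (metis ereal_less_eq(5) less_imp_le order_trans zero_ereal_def)
  have x0: "x \<noteq> 0" using l0 lx by auto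
  have L: "1 < (\<integral>\<^sup>+ x. ennreal (exp (t * x)) \<partial>\<mu>)" by (rule above_loynes[OF t1])
  obtain c j where c1: "1 < c" and cm: "c < integral\<^sup>L \<mu> (gf t j)" using pick_j[OF P S L] by blast
  define r where "r = min (1 / real (Suc j)) (c - 1)"
  have r0: "0 < r" using c1 r_def by simp
  have rj: "r \<le> 1 / real (Suc j)" using r_def by simp
  have ac: "1 + r \<le> c" using r_def by simp
  have gm: "gf t j \<in> borel_measurable \<mu>" using measurable_cong_sets[OF S refl] gf_meas by blast
  obtain \<rho> where \<rho>0: "0 < \<rho>" and \<rho>1: "\<rho> < 1"
    and ch: "\<And>n A. A \<subseteq> {x \<in> space (PiM {..<n} (\<lambda>_. \<mu>)). (\<Sum>i<n. gf t j (x i)) \<le> real n * (1 + r)}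
      \<Longrightarrow> measure (PiM {..<n} (\<lambda>_. \<mu>)) A \<le> \<rho>^n"
    using chernoff[OF P gm, of "real (Suc j)" "1 + r"] gf_nonneg r0 ac cm
    by (auto simp: gf_def)
  define G where "G = {g\<in>XM. setdist (t,1) (epi g) < ereal r}"
  have Gopen: "AW_open G" unfolding G_def by (rule G_open[OF r0])
  have fG: "f \<in> G" if f: "f \<in> Cset x" for f
  proof -
    have fX: "f \<in> XM" using f unfolding Cset_def by (auto split: if_splits)
    have "f t \<le> 1" by (rule Cset_le[OF t0 t2 x0 f])
    hence "(t, 1) \<in> epi f" unfolding epi_def by (simp add: one_ereal_def)
    hence "setdist (t,1) (epi f) \<le> ereal (boxdist (t,1) (t,1))" unfolding setdist_def by (rule INF_lower)
    also have "\<dots> = 0" by (simp add: boxdist_def)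
    also have "\<dots> < ereal r" using r0 by simp
    finally show ?thesis using fX unfolding G_def by blast
  qed
  have prob: "probMn \<mu> n G \<le> \<rho>^n" if n: "0 < n" for n
    unfolding probMn_def
  proof (rule ch, safe)
    fix y assume "y \<in> space (PiM {..<n} (\<lambda>_. \<mu>))" "Mn n y \<in> G"
    thus "(\<Sum>i<n. gf t j (y i)) \<le> real n * (1 + r)"
      using event_incl[OF n r0 rj] unfolding G_def by blast
  qed
  have lim: "limsup (\<lambda>n. ereal (1 / real n) * elog (probMn \<mu> n G)) \<le> ereal (ln \<rho>)"
  proof (rule Limsup_bounded, rule eventually_sequentiallyI[of 1])
    fix n :: nat assume "1 \<le> n"
    hence n: "0 < n" by simp
    show "ereal (1 / real n) * elog (probMn \<mu> n G) \<le> ereal (ln \<rho>)"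
    proof (cases "probMn \<mu> n G \<le> 0")
      case True thus ?thesis using n by (simp add: elog_def)
    next
      case False
      hence pos: "0 < probMn \<mu> n G" by simp
      have "ln (probMn \<mu> n G) \<le> ln (\<rho>^n)" using pos prob[OF n] by simp
      also have "\<dots> = real n * ln \<rho>" using \<rho>0 by (simp add: ln_realpow)
      finally have "(1 / real n) * ln (probMn \<mu> n G) \<le> ln \<rho>" using n by (simp add: field_simps)
      thus ?thesis using False by (simp add: elog_def)
    qed
  qed
  have IMb: "ereal (- ln \<rho>) \<le> IM \<mu> f" if f: "f \<in> Cset x" for f
  proof -
    have "(INF G\<in>{G. AW_open G \<and> f \<in> G}. limsup (\<lambda>n. ereal (1 / real n) * elog (probMn \<mu> n G)))
        \<le> ereal (ln \<rho>)" (is "?I \<le> _")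
      using Gopen fG[OF f] lim by (intro INF_lower2[of G]) auto
    hence "- ereal (ln \<rho>) \<le> - ?I" by (simp only: ereal_minus_le_minus)
    thus ?thesis unfolding IM_def by simp
  qed
  have "ereal (- ln \<rho>) \<le> Idelta \<mu> x" unfolding Idelta_def by (rule INF_greatest) (rule IMb)
  moreover have "0 < ereal (- ln \<rho>)" using \<rho>0 \<rho>1 by simp
  ultimately show "0 < Idelta \<mu> x" by (rule less_le_trans[rotated])
qed
end
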